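(* Let $\theta_1,\theta_2\in\Theta$, $\theta_\alpha=\alpha\theta_1+(1-\alpha)\theta_2$. Then for $\alpha\in[0,1]$, $D^{\mathrm w}_{B,\alpha}(p_{\theta_1},p_{\theta_2})=\alpha F(\theta_1)+(1-\alpha)F(\theta_2)-\hat F(\theta_\alpha)$. Assume moreover that $\hat F$ is strictly convex on the segment $[\theta_1,\theta_2]$ and that a maximiser $\alpha^*$ of $\alpha\mapsto D^{\mathrm w}_{B,\alpha}(p_{\theta_1},p_{\theta_2})$ over $[0,1]$ exists and lies in $(0,1)$. Then $\alpha^*$ is unique and satisfies \[ (\theta_1-\theta_2)^{\mathrm T}\nabla\hat F(\theta_{\alpha^*})=F(\theta_1)-F(\theta_2), \] where $\nabla\hat F(\theta)=\mathbb E_{p^*_\theta}[t(X)]$ with $p^*_\theta=\varphi p_\theta/E_\varphi(\theta)$.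
   Context: Let $\mu$ be a $\sigma$-finite measure on $\mathcal X$ and $\varphi\ge0$ a measurable weight. Let $\{p_\theta:\theta\in\Theta\}$, $\Theta\subset\mathbb R^d$ open and convex, be a regular exponential family $p_\theta(x)=\exp\{\theta^{\mathrm T}t(x)-F(\theta)+k(x)\}$. Set $E_\varphi(\theta)=\int\varphi p_\theta\,\mathrm d\mu\in(0,\infty)$ and $\hat F(\theta)=\ln\int\varphi(x)e^{\theta^{\mathrm T}t(x)+k(x)}\,\mathrm d\mu(x)=F(\theta)+\ln E_\varphi(\theta)$, finite and differentiable on $\Theta$ (differentiation under the integral sign allowed). Weighted affinity $\rho^{\mathrm w}_\alpha(p,q)=\int\varphi\,p^\alpha q^{1-\alpha}\,\mathrm d\mu$ and weighted Bhattacharyya distance $D^{\mathrm w}_{B,\alpha}(p,q)=-\ln\rho^{\mathrm w}_\alpha(p,q)$. *)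

theory Defs
  imports "HOL-Analysis.Analysis"
begin

definition strict_convex_on :: "'a::real_vector set \<Rightarrow> ('a \<Rightarrow> real) \<Rightarrow> bool" where
  "strict_convex_on S f \<longleftrightarrow>
     (\<forall>x\<in>S. \<forall>y\<in>S. x \<noteq> y \<longrightarrow> (\<forall>u::real. 0 < u \<and> u < 1 \<longrightarrow>
        f (u *\<^sub>R x + (1 - u) *\<^sub>R y) < u * f x + (1 - u) * f y))"

definition logpart :: "'a measure \<Rightarrow> ('a \<Rightarrow> 'd::euclidean_space) \<Rightarrow> ('a \<Rightarrow> real) \<Rightarrow> 'd \<Rightarrow> real" where
  "logpart M t k \<theta> = ln (\<integral>x. exp (\<theta> \<bullet> t x + k x) \<partial>M)"

definition expfam :: "'a measure \<Rightarrow> ('a \<Rightarrow> 'd::euclidean_space) \<Rightarrow> ('a \<Rightarrow> real) \<Rightarrow> 'd \<Rightarrow> 'a \<Rightarrow> real" where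
  "expfam M t k \<theta> x = exp (\<theta> \<bullet> t x - logpart M t k \<theta> + k x)"

definition Ephi :: "'a measure \<Rightarrow> ('a \<Rightarrow> real) \<Rightarrow> ('a \<Rightarrow> 'd::euclidean_space) \<Rightarrow> ('a \<Rightarrow> real) \<Rightarrow> 'd \<Rightarrow> real" where
  "Ephi M \<phi> t k \<theta> = (\<integral>x. \<phi> x * expfam M t k \<theta> x \<partial>M)"

definition Fhat :: "'a measure \<Rightarrow> ('a \<Rightarrow> real) \<Rightarrow> ('a \<Rightarrow> 'd::euclidean_space) \<Rightarrow> ('a \<Rightarrow> real) \<Rightarrow> 'd \<Rightarrow> real" where
  "Fhat M \<phi> t k \<theta> = ln (\<integral>x. \<phi> x * exp (\<theta> \<bullet> t x + k x) \<partial>M)"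

definition wrho :: "'a measure \<Rightarrow> ('a \<Rightarrow> real) \<Rightarrow> real \<Rightarrow> ('a \<Rightarrow> real) \<Rightarrow> ('a \<Rightarrow> real) \<Rightarrow> real" where
  "wrho M \<phi> \<alpha> p q = (\<integral>x. \<phi> x * (p x powr \<alpha>) * (q x powr (1 - \<alpha>)) \<partial>M)"

definition wbhat :: "'a measure \<Rightarrow> ('a \<Rightarrow> real) \<Rightarrow> real \<Rightarrow> ('a \<Rightarrow> real) \<Rightarrow> ('a \<Rightarrow> real) \<Rightarrow> real" where
  "wbhat M \<phi> \<alpha> p q = - ln (wrho M \<phi> \<alpha> p q)"

definition escort_mean :: "'a measure \<Rightarrow> ('a \<Rightarrow> real) \<Rightarrow> ('a \<Rightarrow> 'd::euclidean_space) \<Rightarrow> ('a \<Rightarrow> real) \<Rightarrow> 'd \<Rightarrow> 'd" where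
  "escort_mean M \<phi> t k \<theta> =
     (\<integral>x. (\<phi> x * expfam M t k \<theta> x / Ephi M \<phi> t k \<theta>) *\<^sub>R t x \<partial>M)"

end

theory Submission
  imports Defs
begin

lemma arith_helper:
  fixes Db Da Dm Lb La Lm Fb Fa Fm :: real
  assumes "Db = Da" "Dm \<le> Da" "Db = Lb - Fb" "Da = La - Fa" "Dm = Lm - Fm"
    "Fm < 1/2 * Fb + 1/2 * Fa" "Lm = 1/2 * Lb + 1/2 * La"
  shows False
  using assms by linarith

theorem proposition3p5:
  fixes M :: "'a measure" and \<phi> k :: "'a \<Rightarrow> real"
    and t :: "'a \<Rightarrow> 'd::euclidean_space"
    and \<Theta> :: "'d set" and \<theta>1 \<theta>2 :: 'd
  assumes sigma_finite: "sigma_finite_measure M"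
    and phi_meas: "\<phi> \<in> borel_measurable M" and phi_nonneg: "\<And>x. x \<in> space M \<Longrightarrow> 0 \<le> \<phi> x"
    and t_meas: "t \<in> borel_measurable M" and k_meas: "k \<in> borel_measurable M"
    and Theta_open: "open \<Theta>" and Theta_convex: "convex \<Theta>"
    and regular: "\<And>\<theta>. \<theta> \<in> \<Theta> \<Longrightarrow> integrable M (\<lambda>x. exp (\<theta> \<bullet> t x + k x))
                          \<and> (\<integral>x. exp (\<theta> \<bullet> t x + k x) \<partial>M) > 0"
    and Ephi_finite: "\<And>\<theta>. \<theta> \<in> \<Theta> \<Longrightarrow> integrable M (\<lambda>x. \<phi> x * expfam M t k \<theta> x)
                          \<and> Ephi M \<phi> t k \<theta> > 0"
    and diff_under_int: "\<And>\<theta>. \<theta> \<in> \<Theta> \<Longrightarrow>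
          integrable M (\<lambda>x. (\<phi> x * exp (\<theta> \<bullet> t x + k x)) *\<^sub>R t x)
          \<and> ((\<lambda>\<eta>. \<integral>x. \<phi> x * exp (\<eta> \<bullet> t x + k x) \<partial>M) has_derivative
               (\<lambda>h. \<integral>x. \<phi> x * (h \<bullet> t x) * exp (\<theta> \<bullet> t x + k x) \<partial>M)) (at \<theta>)"
    and th1: "\<theta>1 \<in> \<Theta>" and th2: "\<theta>2 \<in> \<Theta>"
  shows "(\<forall>\<alpha>\<in>{0..1::real}.
            wbhat M \<phi> \<alpha> (expfam M t k \<theta>1) (expfam M t k \<theta>2)
            = \<alpha> * logpart M t k \<theta>1 + (1 - \<alpha>) * logpart M t k \<theta>2
              - Fhat M \<phi> t k (\<alpha> *\<^sub>R \<theta>1 + (1 - \<alpha>) *\<^sub>R \<theta>2))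
       \<and> (\<forall>\<alpha>s::real.
            strict_convex_on {0..1::real} (\<lambda>\<alpha>. Fhat M \<phi> t k (\<alpha> *\<^sub>R \<theta>1 + (1 - \<alpha>) *\<^sub>R \<theta>2))
            \<and> \<alpha>s \<in> {0<..<1}
            \<and> (\<forall>\<alpha>\<in>{0..1}. wbhat M \<phi> \<alpha> (expfam M t k \<theta>1) (expfam M t k \<theta>2)
                              \<le> wbhat M \<phi> \<alpha>s (expfam M t k \<theta>1) (expfam M t k \<theta>2))
            \<longrightarrow> (\<forall>\<beta>\<in>{0..1}.
                   (\<forall>\<alpha>\<in>{0..1}. wbhat M \<phi> \<alpha> (expfam M t k \<theta>1) (expfam M t k \<theta>2)
                                 \<le> wbhat M \<phi> \<beta> (expfam M t k \<theta>1) (expfam M t k \<theta>2))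
                   \<longrightarrow> \<beta> = \<alpha>s)
              \<and> (Fhat M \<phi> t k has_derivative
                   (\<lambda>h. h \<bullet> escort_mean M \<phi> t k (\<alpha>s *\<^sub>R \<theta>1 + (1 - \<alpha>s) *\<^sub>R \<theta>2)))
                   (at (\<alpha>s *\<^sub>R \<theta>1 + (1 - \<alpha>s) *\<^sub>R \<theta>2))
              \<and> (\<theta>1 - \<theta>2) \<bullet> escort_mean M \<phi> t k (\<alpha>s *\<^sub>R \<theta>1 + (1 - \<alpha>s) *\<^sub>R \<theta>2)
                = logpart M t k \<theta>1 - logpart M t k \<theta>2)"
proof -
  let ?I = "\<lambda>\<eta>. \<integral>x. \<phi> x * exp (\<eta> \<bullet> t x + k x) \<partial>M"
  let ?F = "logpart M t k"
  let ?th = "\<lambda>a::real. a *\<^sub>R \<theta>1 + (1 - a) *\<^sub>R \<theta>2"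
  let ?D = "\<lambda>a. wbhat M \<phi> a (expfam M t k \<theta>1) (expfam M t k \<theta>2)"
  have Ephi_eq: "Ephi M \<phi> t k \<eta> = ?I \<eta> * exp (- ?F \<eta>)" for \<eta>
  proof -
    have "Ephi M \<phi> t k \<eta> = (\<integral>x. \<phi> x * exp (\<eta> \<bullet> t x + k x) * exp (- ?F \<eta>) \<partial>M)"
      unfolding Ephi_def expfam_def
      by (intro Bochner_Integration.integral_cong refl) (simp add: mult.assoc exp_add[symmetric])
    also have "\<dots> = ?I \<eta> * exp (- ?F \<eta>)" by simp
    finally show ?thesis .
  qed
  have Ipos: "?I \<eta> > 0" if "\<eta> \<in> \<Theta>" for \<eta>
  proof -
    have "Ephi M \<phi> t k \<eta> > 0" using Ephi_finite[OF that] by blast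
    then show ?thesis unfolding Ephi_eq by (simp add: zero_less_mult_iff)
  qed
  have thin: "?th a \<in> \<Theta>" if "a \<in> {0..1}" for a
    using that th1 th2 Theta_convex unfolding convex_def by auto
  have Fh: "Fhat M \<phi> t k \<eta> = ln (?I \<eta>)" for \<eta> unfolding Fhat_def by simp
  have part1: "?D a = a * ?F \<theta>1 + (1 - a) * ?F \<theta>2 - Fhat M \<phi> t k (?th a)" if a: "a \<in> {0..1}" for a
  proof -
    have "wrho M \<phi> a (expfam M t k \<theta>1) (expfam M t k \<theta>2)
        = (\<integral>x. \<phi> x * exp (?th a \<bullet> t x + k x) * exp (- (a * ?F \<theta>1 + (1 - a) * ?F \<theta>2)) \<partial>M)"
      unfolding wrho_def expfam_def
      apply (intro Bochner_Integration.integral_cong refl)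
      apply (simp add: powr_def exp_add[symmetric] inner_add_left algebra_simps)
      done
    also have "\<dots> = ?I (?th a) * exp (- (a * ?F \<theta>1 + (1 - a) * ?F \<theta>2))" by simp
    finally have "wrho M \<phi> a (expfam M t k \<theta>1) (expfam M t k \<theta>2) = \<dots>" .
    then show ?thesis unfolding wbhat_def Fh using Ipos[OF thin[OF a]]
      by (simp add: ln_mult)
  qed
  show ?thesis
  proof (intro conjI allI impI)
    show "\<forall>a\<in>{0..1}. ?D a = a * ?F \<theta>1 + (1 - a) * ?F \<theta>2 - Fhat M \<phi> t k (?th a)"
      using part1 by blast
  next
    fix as :: real
    assume H: "strict_convex_on {0..1::real} (\<lambda>\<alpha>. Fhat M \<phi> t k (?th \<alpha>)) \<and> as \<in> {0<..<1}
            \<and> (\<forall>\<alpha>\<in>{0..1}. ?D \<alpha> \<le> ?D as)"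
    then have sc: "strict_convex_on {0..1::real} (\<lambda>\<alpha>. Fhat M \<phi> t k (?th \<alpha>))"
      and as: "as \<in> {0<..<1}" and mx: "\<forall>\<alpha>\<in>{0..1}. ?D \<alpha> \<le> ?D as" by auto
    show "\<forall>\<beta>\<in>{0..1}. (\<forall>\<alpha>\<in>{0..1}. ?D \<alpha> \<le> ?D \<beta>) \<longrightarrow> \<beta> = as"
    proof (intro ballI impI, rule ccontr)
      fix b assume b: "b \<in> {0..1::real}" and mb: "\<forall>\<alpha>\<in>{0..1}. ?D \<alpha> \<le> ?D b" and ne: "b \<noteq> as"
      define m where "m = (1/2::real) * b + (1 - 1/2) * as"
      have asI: "as \<in> {0..1}" using as by auto
      have mI: "m \<in> {0..1}" using b asI unfolding m_def by auto
      have "\<forall>u. 0 < u \<and> u < 1 \<longrightarrow> Fhat M \<phi> t k ((u *\<^sub>R b + (1 - u) *\<^sub>R as) *\<^sub>R \<theta>1 + (1 - (u *\<^sub>R b + (1 - u) *\<^sub>R as)) *\<^sub>R \<theta>2)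
          < u * Fhat M \<phi> t k (?th b) + (1 - u) * Fhat M \<phi> t k (?th as)"
        using sc b asI ne unfolding strict_convex_on_def by blast
      from this[rule_format, of "1/2"]
      have c: "Fhat M \<phi> t k (?th m) < (1/2) * Fhat M \<phi> t k (?th b) + (1/2) * Fhat M \<phi> t k (?th as)"
        unfolding m_def by simp
      have lin: "m * ?F \<theta>1 + (1 - m) * ?F \<theta>2 = (1/2) * (b * ?F \<theta>1 + (1 - b) * ?F \<theta>2) + (1/2) * (as * ?F \<theta>1 + (1 - as) * ?F \<theta>2)"
        unfolding m_def by (simp add: algebra_simps)
      have "?D b = ?D as" using mb mx b asI by (meson order_antisym)
      moreover have "?D m \<le> ?D as" using mx mI by blast
      ultimately show False using arith_helper[OF _ _ part1[OF b] part1[OF asI] part1[OF mI] c lin] by blast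
    qed
  next
    fix as :: real
    assume H: "strict_convex_on {0..1::real} (\<lambda>\<alpha>. Fhat M \<phi> t k (?th \<alpha>)) \<and> as \<in> {0<..<1}
            \<and> (\<forall>\<alpha>\<in>{0..1}. ?D \<alpha> \<le> ?D as)"
    then have as: "as \<in> {0<..<1}" and mx: "\<forall>\<alpha>\<in>{0..1}. ?D \<alpha> \<le> ?D as" by auto
    have asI: "as \<in> {0..1}" using as by auto
    define \<theta> where "\<theta> = ?th as"
    have thT: "\<theta> \<in> \<Theta>" unfolding \<theta>_def by (rule thin[OF asI])
    have Ip: "?I \<theta> > 0" by (rule Ipos[OF thT])
    have intg: "integrable M (\<lambda>x. (\<phi> x * exp (\<theta> \<bullet> t x + k x)) *\<^sub>R t x)"
      and dI: "(?I has_derivative (\<lambda>h. \<integral>x. \<phi> x * (h \<bullet> t x) * exp (\<theta> \<bullet> t x + k x) \<partial>M)) (at \<theta>)"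
      using diff_under_int[OF thT] by auto
    have ef: "expfam M t k \<theta> x = exp (\<theta> \<bullet> t x + k x) * exp (- ?F \<theta>)" for x
      unfolding expfam_def by (simp add: mult_exp_exp)
    have esc: "escort_mean M \<phi> t k \<theta> = (1 / ?I \<theta>) *\<^sub>R (\<integral>x. (\<phi> x * exp (\<theta> \<bullet> t x + k x)) *\<^sub>R t x \<partial>M)"
    proof -
      have "escort_mean M \<phi> t k \<theta> = (\<integral>x. (1 / ?I \<theta>) *\<^sub>R ((\<phi> x * exp (\<theta> \<bullet> t x + k x)) *\<^sub>R t x) \<partial>M)"
        unfolding escort_mean_def Ephi_eq ef
        using Ip by (intro Bochner_Integration.integral_cong refl) simp
      then show ?thesis by (simp only: integral_scaleR_right)
    qed
    have inner_eq: "h \<bullet> escort_mean M \<phi> t k \<theta> = (1 / ?I \<theta>) * (\<integral>x. \<phi> x * (h \<bullet> t x) * exp (\<theta> \<bullet> t x + k x) \<partial>M)" for h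
    proof -
      have "h \<bullet> (\<integral>x. (\<phi> x * exp (\<theta> \<bullet> t x + k x)) *\<^sub>R t x \<partial>M) = (\<integral>x. h \<bullet> ((\<phi> x * exp (\<theta> \<bullet> t x + k x)) *\<^sub>R t x) \<partial>M)"
        using intg by (rule integral_inner_right[symmetric])
      also have "\<dots> = (\<integral>x. \<phi> x * (h \<bullet> t x) * exp (\<theta> \<bullet> t x + k x) \<partial>M)"
        by (intro Bochner_Integration.integral_cong refl) (simp add: algebra_simps)
      finally show ?thesis unfolding esc by (simp add: inner_scaleR_right)
    qed
    have dF: "(Fhat M \<phi> t k has_derivative (\<lambda>h. h \<bullet> escort_mean M \<phi> t k \<theta>)) (at \<theta>)"
    proof -
      have "((\<lambda>\<eta>. ln (?I \<eta>)) has_derivative (\<lambda>h. (\<integral>x. \<phi> x * (h \<bullet> t x) * exp (\<theta> \<bullet> t x + k x) \<partial>M) * inverse (?I \<theta>))) (at \<theta>)"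
        by (rule has_derivative_ln[OF Ip dI])
      then show ?thesis unfolding inner_eq Fh[abs_def] by (simp add: divide_inverse mult.commute)
    qed
    then show "(Fhat M \<phi> t k has_derivative (\<lambda>h. h \<bullet> escort_mean M \<phi> t k (?th as))) (at (?th as))"
      unfolding \<theta>_def .
    let ?E = "\<lambda>a. a * ?F \<theta>1 + (1 - a) * ?F \<theta>2 - Fhat M \<phi> t k (?th a)"
    have dth: "(?th has_derivative (\<lambda>h. h *\<^sub>R (\<theta>1 - \<theta>2))) (at as)"
      by (auto intro!: derivative_eq_intros simp: algebra_simps)
    have dFc: "((\<lambda>a. Fhat M \<phi> t k (?th a)) has_derivative (\<lambda>h. (h *\<^sub>R (\<theta>1 - \<theta>2)) \<bullet> escort_mean M \<phi> t k \<theta>)) (at as)"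
      using has_derivative_compose[OF dth dF[unfolded \<theta>_def]] unfolding \<theta>_def .
    have dE: "(?E has_derivative (\<lambda>h. h * (?F \<theta>1 - ?F \<theta>2 - (\<theta>1 - \<theta>2) \<bullet> escort_mean M \<phi> t k \<theta>))) (at as)"
    proof -
      have l: "((\<lambda>a. a * ?F \<theta>1 + (1 - a) * ?F \<theta>2) has_derivative (\<lambda>h. h * (?F \<theta>1 - ?F \<theta>2))) (at as)"
      proof -
        have "((\<lambda>a. a * ?F \<theta>1 + (1 - a) * ?F \<theta>2) has_real_derivative (?F \<theta>1 - ?F \<theta>2)) (at as)"
          by (auto intro!: derivative_eq_intros)
        then show ?thesis unfolding has_field_derivative_def by (simp add: mult.commute[of _ "?F \<theta>1 - ?F \<theta>2"])
      qed
      show ?thesis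
        by (rule has_derivative_eq_rhs[OF has_derivative_diff[OF l dFc]]) (auto simp: fun_eq_iff algebra_simps)
    qed
    then have "DERIV ?E as :> (?F \<theta>1 - ?F \<theta>2 - (\<theta>1 - \<theta>2) \<bullet> escort_mean M \<phi> t k \<theta>)"
      unfolding has_field_derivative_def by (rule has_derivative_eq_rhs) (simp add: fun_eq_iff mult.commute)
    moreover have "0 < min as (1 - as)" using as by auto
    moreover have "\<forall>y. \<bar>as - y\<bar> < min as (1 - as) \<longrightarrow> ?E y \<le> ?E as"
    proof (intro allI impI)
      fix y assume "\<bar>as - y\<bar> < min as (1 - as)"
      then have yI: "y \<in> {0..1}" by auto
      show "?E y \<le> ?E as" using bspec[OF mx yI] part1[OF yI] part1[OF asI] by simp
    qed
    ultimately have "?F \<theta>1 - ?F \<theta>2 - (\<theta>1 - \<theta>2) \<bullet> escort_mean M \<phi> t k \<theta> = 0"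
      by (rule DERIV_local_max)
    then show "(\<theta>1 - \<theta>2) \<bullet> escort_mean M \<phi> t k (?th as) = ?F \<theta>1 - ?F \<theta>2"
      unfolding \<theta>_def by simp
  qed
qed

end
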